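(* Let $s\ge1$ be an integer and let $(G,Z)$ be a plantation. Then there is a dyadic plantation $(G',Z')$ with $|G'|\le|G|$ and $|Z'|\le|Z|$ such that $n(G,Z)\le n(G',Z')$.
   Context: Graphs are finite and simple; $|G|$ is the number of vertices. Two subgraphs are anticomplete if their vertex sets are disjoint and no edge joins them. $G$ is $s\mathcal{O}$-free if no $s$ cycles of $G$ are pairwise vertex-disjoint and pairwise anticomplete. $Z\subseteq V(G)$ is cycle-hitting if every cycle of $G$ has a vertex in $Z$. A plantation is a pair $(G,Z)$ with $G$ an $s\mathcal{O}$-free graph and $Z$ cycle-hitting. $(G,Z)$ is dyadic if $Z$ is stable and every vertex of $V(G)\setminus Z$ has at most two neighbours in $Z$. $n(G,Z)$ denotes the number of induced paths $P$ of $G$ with $Z\subseteq V(P)$ and both ends of $P$ in $Z$. *)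

theory Defs
  imports Main
begin

definition graph :: "'a set \<Rightarrow> 'a set set \<Rightarrow> bool" where
  "graph V E \<longleftrightarrow> finite V \<and> (\<forall>e\<in>E. \<exists>u v. u \<noteq> v \<and> u \<in> V \<and> v \<in> V \<and> e = {u, v})"

definition adj :: "'a set set \<Rightarrow> 'a \<Rightarrow> 'a \<Rightarrow> bool" where
  "adj E u v \<longleftrightarrow> {u, v} \<in> E"

definition is_cycle :: "'a set \<Rightarrow> 'a set set \<Rightarrow> 'a list \<Rightarrow> bool" where
  "is_cycle V E xs \<longleftrightarrow> distinct xs \<and> length xs \<ge> 3 \<and> set xs \<subseteq> V \<and>
     (\<forall>i < length xs. adj E (xs ! i) (xs ! ((i + 1) mod length xs)))"

definition anticomplete :: "'a set set \<Rightarrow> 'a set \<Rightarrow> 'a set \<Rightarrow> bool" where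
  "anticomplete E A B \<longleftrightarrow> A \<inter> B = {} \<and> (\<forall>a\<in>A. \<forall>b\<in>B. \<not> adj E a b)"

definition sO_free :: "nat \<Rightarrow> 'a set \<Rightarrow> 'a set set \<Rightarrow> bool" where
  "sO_free s V E \<longleftrightarrow> \<not> (\<exists>C :: nat \<Rightarrow> 'a list.
      (\<forall>i < s. is_cycle V E (C i)) \<and>
      (\<forall>i < s. \<forall>j < s. i \<noteq> j \<longrightarrow> anticomplete E (set (C i)) (set (C j))))"

definition cycle_hitting :: "'a set \<Rightarrow> 'a set set \<Rightarrow> 'a set \<Rightarrow> bool" where
  "cycle_hitting V E Z \<longleftrightarrow> Z \<subseteq> V \<and> (\<forall>xs. is_cycle V E xs \<longrightarrow> set xs \<inter> Z \<noteq> {})"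

definition plantation :: "nat \<Rightarrow> 'a set \<Rightarrow> 'a set set \<Rightarrow> 'a set \<Rightarrow> bool" where
  "plantation s V E Z \<longleftrightarrow> graph V E \<and> sO_free s V E \<and> cycle_hitting V E Z"

definition dyadic :: "'a set \<Rightarrow> 'a set set \<Rightarrow> 'a set \<Rightarrow> bool" where
  "dyadic V E Z \<longleftrightarrow> (\<forall>u\<in>Z. \<forall>v\<in>Z. \<not> adj E u v) \<and>
     (\<forall>v \<in> V - Z. card {z\<in>Z. adj E v z} \<le> 2)"

definition induced_path :: "'a set \<Rightarrow> 'a set set \<Rightarrow> 'a list \<Rightarrow> bool" where
  "induced_path V E xs \<longleftrightarrow> xs \<noteq> [] \<and> distinct xs \<and> set xs \<subseteq> V \<and>
     (\<forall>i < length xs. \<forall>j < length xs. adj E (xs ! i) (xs ! j) \<longleftrightarrow> (i + 1 = j \<or> j + 1 = i))"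

text \<open>n(G,Z): number of induced paths P (an induced subgraph, hence determined
  by its vertex set) with Z \<subseteq> V(P) and both ends in Z.\<close>

definition n_paths :: "'a set \<Rightarrow> 'a set set \<Rightarrow> 'a set \<Rightarrow> nat" where
  "n_paths V E Z = card {S. \<exists>xs. induced_path V E xs \<and> set xs = S \<and> Z \<subseteq> S \<and>
      hd xs \<in> Z \<and> last xs \<in> Z}"

end

theory Submission imports Defs begin

lemma adj_sym: "adj E u v = adj E v u"
  unfolding adj_def by (simp add: insert_commute)

lemma graph_noloop: "graph V E \<Longrightarrow> \<not> adj E u u"
  unfolding graph_def adj_def by (metis doubleton_eq_iff)

lemma graph_adjV: "graph V E \<Longrightarrow> adj E u v \<Longrightarrow> u \<in> V \<and> v \<in> V"
  unfolding graph_def adj_def by (metis doubleton_eq_iff)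

lemma successively_nth:
  "successively P xs \<longleftrightarrow> (\<forall>i. Suc i < length xs \<longrightarrow> P (xs ! i) (xs ! Suc i))"
proof (induction xs)
  case (Cons x xs)
  show ?case
  proof (cases xs)
    case (Cons y ys)
    then show ?thesis using Cons.IH
      by (auto simp: nth_Cons split: nat.splits)
  qed simp
qed simp

lemma is_cycle_alt:
  "is_cycle V E xs \<longleftrightarrow> distinct xs \<and> length xs \<ge> 3 \<and> set xs \<subseteq> V \<and>
     successively (adj E) xs \<and> adj E (last xs) (hd xs)"
proof -
  have "(\<forall>i < length xs. adj E (xs ! i) (xs ! ((i + 1) mod length xs))) \<longleftrightarrow>
        successively (adj E) xs \<and> adj E (last xs) (hd xs)" if "length xs \<ge> 3"
  proof
    assume H: "\<forall>i < length xs. adj E (xs ! i) (xs ! ((i + 1) mod length xs))"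
    have "successively (adj E) xs" unfolding successively_nth
    proof (intro allI impI)
      fix i assume "Suc i < length xs"
      then show "adj E (xs ! i) (xs ! Suc i)" using H[rule_format, of i] by simp
    qed
    moreover have "adj E (last xs) (hd xs)"
    proof -
      have m0: "length xs - 1 + 1 = length xs" using that by simp
      have m: "(length xs - 1 + 1) mod length xs = 0" unfolding m0 by simp
      have "adj E (xs ! (length xs - 1)) (xs ! 0)"
        using H[rule_format, of "length xs - 1"] that unfolding m by simp
      moreover have ne: "xs \<noteq> []" using that by auto
      ultimately show ?thesis
        by (simp add: last_conv_nth[OF ne] hd_conv_nth[OF ne])
    qed
    ultimately show "successively (adj E) xs \<and> adj E (last xs) (hd xs)" by simp
  next
    assume H: "successively (adj E) xs \<and> adj E (last xs) (hd xs)"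
    show "\<forall>i < length xs. adj E (xs ! i) (xs ! ((i + 1) mod length xs))"
    proof (intro allI impI)
      fix i assume i: "i < length xs"
      show "adj E (xs ! i) (xs ! ((i + 1) mod length xs))"
      proof (cases "Suc i < length xs")
        case True then show ?thesis using H unfolding successively_nth by simp
      next
        case False
        then have ii: "i = length xs - 1" using i by simp
        have m0: "length xs - 1 + 1 = length xs" using that by simp
        have ne: "xs \<noteq> []" using that by auto
        show ?thesis unfolding ii m0 using H
          by (simp add: last_conv_nth[OF ne] hd_conv_nth[OF ne])
      qed
    qed
  qed
  then show ?thesis unfolding is_cycle_def by blast
qed

lemma is_cycle_rotate1:
  assumes "is_cycle V E xs" shows "is_cycle V E (rotate1 xs)"
proof -
  obtain x ys where xs: "xs = x # ys" using assms unfolding is_cycle_def by (cases xs) auto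
  have ys: "ys \<noteq> []" using assms xs unfolding is_cycle_def by auto
  have s: "successively (adj E) (x # ys)" and c: "adj E (last (x#ys)) x"
    using assms xs unfolding is_cycle_alt by auto
  have "successively (adj E) (ys @ [x])"
    using s c ys by (auto simp: successively_append_iff successively_Cons)
  moreover have "adj E (last (ys @ [x])) (hd (ys @ [x]))"
    using s ys by (auto simp: successively_Cons adj_sym)
  ultimately show ?thesis using assms xs unfolding is_cycle_alt by auto
qed

lemma is_cycle_rotate: "is_cycle V E xs \<Longrightarrow> is_cycle V E (rotate n xs)"
  by (induction n) (auto simp: is_cycle_rotate1)

lemma is_cycle_start:
  assumes "is_cycle V E xs" "z \<in> set xs"
  obtains cs where "is_cycle V E (z # cs)" "set (z # cs) = set xs"
proof -
  obtain as bs where "xs = as @ z # bs" using assms(2) by (metis split_list)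
  then have "rotate (length as) xs = z # bs @ as" by (simp add: rotate_append)
  then show ?thesis using that is_cycle_rotate[OF assms(1), of "length as"]
    by (metis set_rotate)
qed

lemma sub_cycle:
  assumes "V' \<subseteq> V" "\<And>a b. adj E' a b \<Longrightarrow> adj E a b" "is_cycle V' E' xs"
  shows "is_cycle V E xs"
  using assms unfolding is_cycle_def by blast

lemma sub_sO_free:
  assumes "V' \<subseteq> V" "\<And>a b. adj E' a b \<Longrightarrow> adj E a b"
    "\<And>a b. a \<in> V' \<Longrightarrow> b \<in> V' \<Longrightarrow> adj E a b \<Longrightarrow> adj E' a b"
    "sO_free s V E"
  shows "sO_free s V' E'"
  unfolding sO_free_def
proof
  assume "\<exists>C :: nat \<Rightarrow> 'a list. (\<forall>i < s. is_cycle V' E' (C i)) \<and>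
      (\<forall>i < s. \<forall>j < s. i \<noteq> j \<longrightarrow> anticomplete E' (set (C i)) (set (C j)))"
  then obtain C :: "nat \<Rightarrow> 'a list" where C: "\<forall>i < s. is_cycle V' E' (C i)"
    "\<forall>i < s. \<forall>j < s. i \<noteq> j \<longrightarrow> anticomplete E' (set (C i)) (set (C j))" by blast
  have "\<forall>i < s. is_cycle V E (C i)" using C(1) sub_cycle[OF assms(1,2)] by blast
  moreover have "\<forall>i < s. \<forall>j < s. i \<noteq> j \<longrightarrow> anticomplete E (set (C i)) (set (C j))"
  proof (intro allI impI)
    fix i j assume ij: "i < s" "j < s" "i \<noteq> j"
    have "set (C i) \<subseteq> V'" "set (C j) \<subseteq> V'" using C(1) ij unfolding is_cycle_def by auto
    then show "anticomplete E (set (C i)) (set (C j))"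
      using C(2) ij assms(3) unfolding anticomplete_def by blast
  qed
  ultimately show False using assms(4) unfolding sO_free_def by blast
qed

lemma sub_hitting:
  assumes "V' \<subseteq> V" "\<And>a b. adj E' a b \<Longrightarrow> adj E a b" "cycle_hitting V E Z" "Z \<subseteq> V'"
  shows "cycle_hitting V' E' Z"
  using assms sub_cycle[OF assms(1,2)] unfolding cycle_hitting_def by blast

lemma induced_path_nbrs:
  assumes "induced_path V E xs" "x \<in> set xs"
  shows "card {y \<in> set xs. adj E x y} \<le> 2"
proof -
  obtain i where i: "i < length xs" "xs ! i = x" using assms(2) by (metis in_set_conv_nth)
  have "{y \<in> set xs. adj E x y} \<subseteq> {xs ! (i - 1), xs ! (i + 1)}"
  proof
    fix y assume "y \<in> {y \<in> set xs. adj E x y}"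
    then obtain j where j: "j < length xs" "xs ! j = y" "adj E x y" by (auto simp: in_set_conv_nth)
    then have "i + 1 = j \<or> j + 1 = i" using assms(1) i unfolding induced_path_def by blast
    then show "y \<in> {xs ! (i - 1), xs ! (i + 1)}" using j by auto
  qed
  moreover have "card {xs ! (i - 1), xs ! (i + 1)} \<le> 2" by (simp add: card_insert_le_m1)
  ultimately show ?thesis by (meson card_mono finite.emptyI finite.insertI le_trans)
qed

lemma n_paths_finite:
  assumes "finite V"
  shows "finite {S. \<exists>xs. induced_path V E xs \<and> set xs = S \<and> Z \<subseteq> S \<and> hd xs \<in> Z \<and> last xs \<in> Z}"
proof (rule finite_subset[of _ "Pow V"])
  show "{S. \<exists>xs. induced_path V E xs \<and> set xs = S \<and> Z \<subseteq> S \<and> hd xs \<in> Z \<and> last xs \<in> Z} \<subseteq> Pow V"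
    unfolding induced_path_def by auto
qed (use assms in simp)

definition delE :: "'a set set \<Rightarrow> 'a \<Rightarrow> 'a set set" where
  "delE E v = {e \<in> E. v \<notin> e}"

lemma adj_delE: "adj (delE E v) a b \<longleftrightarrow> adj E a b \<and> a \<noteq> v \<and> b \<noteq> v"
  unfolding adj_def delE_def by auto

lemma delete_plantation:
  assumes "plantation s V E Z" "v \<in> V" "v \<notin> Z"
  shows "plantation s (V - {v}) (delE E v) Z"
proof -
  have g: "graph V E" "sO_free s V E" "cycle_hitting V E Z" using assms(1) unfolding plantation_def by auto
  have "graph (V - {v}) (delE E v)" using g(1) unfolding graph_def delE_def by fastforce
  moreover have "sO_free s (V - {v}) (delE E v)"
    by (rule sub_sO_free[OF _ _ _ g(2)]) (auto simp: adj_delE)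
  moreover have "cycle_hitting (V - {v}) (delE E v) Z"
    by (rule sub_hitting[OF _ _ g(3)]) (use g(3) assms(3) in \<open>auto simp: adj_delE cycle_hitting_def\<close>)
  ultimately show ?thesis unfolding plantation_def by auto
qed

lemma delete_n_paths:
  assumes "graph V E" "v \<in> V" "v \<notin> Z" "card {z \<in> Z. adj E v z} > 2"
  shows "n_paths V E Z \<le> n_paths (V - {v}) (delE E v) Z"
  unfolding n_paths_def
proof (rule card_mono)
  show "finite {S. \<exists>xs. induced_path (V - {v}) (delE E v) xs \<and> set xs = S \<and> Z \<subseteq> S \<and> hd xs \<in> Z \<and> last xs \<in> Z}"
    by (rule n_paths_finite) (use assms(1) in \<open>auto simp: graph_def\<close>)
next
  show "{S. \<exists>xs. induced_path V E xs \<and> set xs = S \<and> Z \<subseteq> S \<and> hd xs \<in> Z \<and> last xs \<in> Z}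
    \<subseteq> {S. \<exists>xs. induced_path (V - {v}) (delE E v) xs \<and> set xs = S \<and> Z \<subseteq> S \<and> hd xs \<in> Z \<and> last xs \<in> Z}"
  proof
    fix S assume "S \<in> {S. \<exists>xs. induced_path V E xs \<and> set xs = S \<and> Z \<subseteq> S \<and> hd xs \<in> Z \<and> last xs \<in> Z}"
    then obtain xs where H: "induced_path V E xs" "Z \<subseteq> set xs" "hd xs \<in> Z" "last xs \<in> Z" "set xs = S" by blast
    have "v \<notin> set xs"
    proof
      assume v: "v \<in> set xs"
      have "{z \<in> Z. adj E v z} \<subseteq> {y \<in> set xs. adj E v y}" using H(2) by auto
      then have "card {z \<in> Z. adj E v z} \<le> card {y \<in> set xs. adj E v y}" by (intro card_mono) auto
      then show False using induced_path_nbrs[OF H(1) v] assms(4) by linarith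
    qed
    then have "induced_path (V - {v}) (delE E v) xs"
      using H(1) unfolding induced_path_def by (auto simp: adj_delE)
    then show "S \<in> {S. \<exists>xs. induced_path (V - {v}) (delE E v) xs \<and> set xs = S \<and> Z \<subseteq> S \<and> hd xs \<in> Z \<and> last xs \<in> Z}"
      using H by blast
  qed
qed

definition cf :: "'a \<Rightarrow> 'a \<Rightarrow> 'a \<Rightarrow> 'a" where
  "cf z1 z2 x = (if x = z2 then z1 else x)"

definition conE :: "'a set set \<Rightarrow> 'a \<Rightarrow> 'a \<Rightarrow> 'a set set" where
  "conE E z1 z2 = (\<lambda>e. cf z1 z2 ` e) ` (E - {{z1, z2}})"

lemma adj_conE_ne:
  assumes "z1 \<noteq> z2" "adj (conE E z1 z2) a b" shows "a \<noteq> z2 \<and> b \<noteq> z2"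
  using assms unfolding adj_def conE_def cf_def by (auto simp: doubleton_eq_iff split: if_splits)

lemma adj_conE:
  assumes "graph V E" "z1 \<noteq> z2" "a \<noteq> z2" "b \<noteq> z2"
  shows "adj (conE E z1 z2) a b \<longleftrightarrow>
    adj E a b \<or> (a = z1 \<and> b \<noteq> z1 \<and> adj E z2 b) \<or> (b = z1 \<and> a \<noteq> z1 \<and> adj E a z2)"
proof
  assume "adj (conE E z1 z2) a b"
  then obtain e where e: "e \<in> E" "e \<noteq> {z1, z2}" "{a, b} = cf z1 z2 ` e"
    unfolding adj_def conE_def by auto
  obtain u w where uw: "u \<noteq> w" "e = {u, w}" using assms(1) e(1) unfolding graph_def by blast
  have ab: "{a, b} = {cf z1 z2 u, cf z1 z2 w}" using e(3) uw(2) by simp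
  show "adj E a b \<or> (a = z1 \<and> b \<noteq> z1 \<and> adj E z2 b) \<or> (b = z1 \<and> a \<noteq> z1 \<and> adj E a z2)"
  proof (cases "u = z2")
    case True
    then have "w \<noteq> z1" "w \<noteq> z2" using uw e(2) by auto
    then have "{a, b} = {z1, w}" using ab True by (simp add: cf_def)
    then show ?thesis using e(1) uw True \<open>w \<noteq> z1\<close> unfolding adj_def
      by (auto simp: doubleton_eq_iff insert_commute)
  next
    case False
    show ?thesis
    proof (cases "w = z2")
      case True
      then have "u \<noteq> z1" using uw e(2) by auto
      then have "{a, b} = {u, z1}" using ab True False by (simp add: cf_def)
      then show ?thesis using e(1) uw True \<open>u \<noteq> z1\<close> unfolding adj_def
        by (auto simp: doubleton_eq_iff insert_commute)
    next
      case False
      then have "{a, b} = e" using ab \<open>u \<noteq> z2\<close> uw by (simp add: cf_def)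
      then show ?thesis using e(1) unfolding adj_def by simp
    qed
  qed
next
  assume H: "adj E a b \<or> (a = z1 \<and> b \<noteq> z1 \<and> adj E z2 b) \<or> (b = z1 \<and> a \<noteq> z1 \<and> adj E a z2)"
  show "adj (conE E z1 z2) a b"
  proof -
    consider "adj E a b" | "a = z1" "b \<noteq> z1" "adj E z2 b" | "b = z1" "a \<noteq> z1" "adj E a z2"
      using H by blast
    then show ?thesis
    proof cases
      case 1
      have "{a, b} \<noteq> {z1, z2}" using assms(3,4) by (auto simp: doubleton_eq_iff)
      moreover have "cf z1 z2 ` {a, b} = {a, b}" using assms(3,4) by (simp add: cf_def)
      ultimately show ?thesis using 1 unfolding adj_def conE_def by (metis DiffI image_eqI singletonD)
    next
      case 2
      have "{z2, b} \<noteq> {z1, z2}" using 2 assms by (auto simp: doubleton_eq_iff)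
      moreover have "cf z1 z2 ` {z2, b} = {a, b}" using assms(4) 2 by (auto simp: cf_def)
      ultimately show ?thesis using 2 unfolding adj_def conE_def by (metis DiffI image_eqI singletonD)
    next
      case 3
      have "{a, z2} \<noteq> {z1, z2}" using 3 assms by (auto simp: doubleton_eq_iff)
      moreover have "cf z1 z2 ` {a, z2} = {a, b}" using assms(3) 3 by (simp add: cf_def)
      ultimately show ?thesis using 3 unfolding adj_def conE_def by (metis DiffI image_eqI singletonD)
    qed
  qed
qed

lemma graph_conE:
  assumes "graph V E" "z1 \<in> V" "z1 \<noteq> z2"
  shows "graph (V - {z2}) (conE E z1 z2)"
  unfolding graph_def
proof
  show "finite (V - {z2})" using assms(1) unfolding graph_def by auto
  show "\<forall>e\<in>conE E z1 z2. \<exists>u v. u \<noteq> v \<and> u \<in> V - {z2} \<and> v \<in> V - {z2} \<and> e = {u, v}"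
  proof
    fix e' assume "e' \<in> conE E z1 z2"
    then obtain e where e: "e \<in> E" "e \<noteq> {z1, z2}" "e' = cf z1 z2 ` e"
      unfolding conE_def by auto
    obtain u w where uw: "u \<noteq> w" "e = {u, w}" "u \<in> V" "w \<in> V"
      using assms(1) e(1) unfolding graph_def by blast
    have "cf z1 z2 u \<noteq> cf z1 z2 w" using uw e(2) unfolding cf_def by auto
    moreover have "cf z1 z2 u \<in> V - {z2}" "cf z1 z2 w \<in> V - {z2}"
      using uw assms unfolding cf_def by auto
    ultimately show "\<exists>u v. u \<noteq> v \<and> u \<in> V - {z2} \<and> v \<in> V - {z2} \<and> e' = {u, v}"
      using e(3) uw(2) by auto
  qed
qed

lemma con_lift:
  assumes g: "graph V E" and z: "z1 \<in> V" "z2 \<in> V" "z1 \<noteq> z2" "adj E z1 z2"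
    and C: "is_cycle (V - {z2}) (conE E z1 z2) C"
  shows "\<exists>D. is_cycle V E D \<and> set D \<subseteq> set C \<union> {z2} \<and> (z1 \<notin> set C \<longrightarrow> D = C)"
proof -
  let ?E' = "conE E z1 z2"
  have adjoff: "adj E a b" if "adj ?E' a b" "a \<noteq> z1" "b \<noteq> z1" for a b
    using adj_conE[OF g z(3)] adj_conE_ne[OF z(3)] that by blast
  show ?thesis
  proof (cases "z1 \<in> set C")
    case False
    have "successively (adj ?E') C" "adj ?E' (last C) (hd C)" using C unfolding is_cycle_alt by auto
    moreover have "C \<noteq> []" using C unfolding is_cycle_def by auto
    then have "hd C \<in> set C" "last C \<in> set C" by auto
    ultimately have "successively (adj E) C" "adj E (last C) (hd C)"
      using False adjoff by (auto intro: successively_mono)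
    then have "is_cycle V E C" using C unfolding is_cycle_alt by auto
    then show ?thesis using False by auto
  next
    case True
    obtain cs where cs: "is_cycle (V - {z2}) ?E' (z1 # cs)" "set (z1 # cs) = set C"
      using is_cycle_start[OF C True] by blast
    have cs1: "distinct (z1 # cs)" "length cs \<ge> 2" "set cs \<subseteq> V - {z2}"
      "successively (adj ?E') (z1 # cs)" "adj ?E' (last cs) z1"
      using cs(1) unfolding is_cycle_alt by (auto split: if_splits)
    have ne: "cs \<noteq> []" using cs1(2) by auto
    have h1: "adj ?E' z1 (hd cs)" and sc: "successively (adj ?E') cs"
      using cs1(4) ne by (auto simp: successively_Cons)
    have hdin: "hd cs \<in> set cs" "last cs \<in> set cs" using ne by auto
    have scE: "successively (adj E) cs"
      using sc cs1(1) adjoff by (auto intro: successively_mono)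
    have z2n: "z2 \<notin> set cs" using cs1(3) by auto
    have z1n: "z1 \<notin> set cs" using cs1(1) by auto
    have A1: "adj E z1 (hd cs) \<or> adj E z2 (hd cs)"
      using h1 adj_conE[OF g z(3)] z2n z1n hdin z(3) by (metis adj_sym)
    have A2: "adj E (last cs) z1 \<or> adj E (last cs) z2"
      using cs1(5) adj_conE[OF g z(3)] z2n z1n hdin z(3) by (metis adj_sym)
    have csV: "set cs \<subseteq> V" using cs1(3) by auto
    have z12: "adj E z2 z1" using z(4) adj_sym by metis
    have "\<exists>D. is_cycle V E D \<and> set D \<subseteq> insert z1 (set cs) \<union> {z2}"
    proof (cases "adj E z1 (hd cs)")
      case a: True
      show ?thesis
      proof (cases "adj E (last cs) z1")
        case True
        have "is_cycle V E (z1 # cs)" unfolding is_cycle_alt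
          using cs1 z csV scE a True ne by (auto simp: successively_Cons)
        then show ?thesis by fastforce
      next
        case False
        then have b: "adj E (last cs) z2" using A2 by blast
        have "is_cycle V E (z1 # cs @ [z2])" unfolding is_cycle_alt
          using cs1 z csV scE a b ne z2n z12 by (auto simp: successively_Cons successively_append_iff)
        then show ?thesis by fastforce
      qed
    next
      case False
      then have a: "adj E z2 (hd cs)" using A1 by blast
      show ?thesis
      proof (cases "adj E (last cs) z2")
        case True
        have "is_cycle V E (z2 # cs)" unfolding is_cycle_alt
          using cs1 z csV scE a True ne z2n by (auto simp: successively_Cons)
        then show ?thesis by fastforce
      next
        case False
        then have b: "adj E (last cs) z1" using A2 by blast
        have "is_cycle V E (z2 # cs @ [z1])" unfolding is_cycle_alt
          using cs1 z csV scE a b ne z2n z(4) by (auto simp: successively_Cons successively_append_iff)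
        then show ?thesis by fastforce
      qed
    qed
    then show ?thesis using True cs(2) by (metis list.simps(15))
  qed
qed

lemma contract_plantation:
  assumes P: "plantation s V E Z" and z: "z1 \<in> Z" "z2 \<in> Z" "adj E z1 z2"
  shows "plantation s (V - {z2}) (conE E z1 z2) (Z - {z2})"
proof -
  have g: "graph V E" "sO_free s V E" "cycle_hitting V E Z" using P unfolding plantation_def by auto
  have ZV: "Z \<subseteq> V" using g(3) unfolding cycle_hitting_def by auto
  have z12: "z1 \<noteq> z2" using graph_noloop[OF g(1)] z(3) by blast
  have zV: "z1 \<in> V" "z2 \<in> V" using ZV z by auto
  let ?E' = "conE E z1 z2" and ?V' = "V - {z2}"
  have lift: "\<exists>D. is_cycle V E D \<and> set D \<subseteq> set C \<union> {z2} \<and> (z1 \<notin> set C \<longrightarrow> D = C)"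
    if "is_cycle ?V' ?E' C" for C
    using con_lift[OF g(1) zV z12 z(3) that] .
  have A: "adj ?E' a b \<longleftrightarrow>
    adj E a b \<or> (a = z1 \<and> b \<noteq> z1 \<and> adj E z2 b) \<or> (b = z1 \<and> a \<noteq> z1 \<and> adj E a z2)"
    if "a \<noteq> z2" "b \<noteq> z2" for a b using adj_conE[OF g(1) z12 that] .
  have "cycle_hitting ?V' ?E' (Z - {z2})"
    unfolding cycle_hitting_def
  proof (intro conjI allI impI)
    show "Z - {z2} \<subseteq> ?V'" using ZV by auto
    fix xs assume xs: "is_cycle ?V' ?E' xs"
    show "set xs \<inter> (Z - {z2}) \<noteq> {}"
    proof
      assume H: "set xs \<inter> (Z - {z2}) = {}"
      then have "z1 \<notin> set xs" using z z12 by auto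
      then have "is_cycle V E xs" using lift[OF xs] by auto
      moreover have "z2 \<notin> set xs" using xs unfolding is_cycle_def by auto
      ultimately show False using g(3) H unfolding cycle_hitting_def by blast
    qed
  qed
  moreover have "sO_free s ?V' ?E'"
    unfolding sO_free_def
  proof
    assume "\<exists>C :: nat \<Rightarrow> 'a list. (\<forall>i < s. is_cycle ?V' ?E' (C i)) \<and>
      (\<forall>i < s. \<forall>j < s. i \<noteq> j \<longrightarrow> anticomplete ?E' (set (C i)) (set (C j)))"
    then obtain C :: "nat \<Rightarrow> 'a list" where C: "\<forall>i < s. is_cycle ?V' ?E' (C i)"
      "\<forall>i < s. \<forall>j < s. i \<noteq> j \<longrightarrow> anticomplete ?E' (set (C i)) (set (C j))" by blast
    have "\<forall>i. \<exists>D. i < s \<longrightarrow> (is_cycle V E D \<and> set D \<subseteq> set (C i) \<union> {z2} \<and> (z1 \<notin> set (C i) \<longrightarrow> D = C i))"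
      using lift C(1) by blast
    then have "\<exists>D. \<forall>i. i < s \<longrightarrow> (is_cycle V E (D i) \<and> set (D i) \<subseteq> set (C i) \<union> {z2} \<and> (z1 \<notin> set (C i) \<longrightarrow> D i = C i))"
      by (rule choice)
    then obtain D where D0: "\<forall>i. i < s \<longrightarrow> (is_cycle V E (D i) \<and> set (D i) \<subseteq> set (C i) \<union> {z2} \<and> (z1 \<notin> set (C i) \<longrightarrow> D i = C i))"
      by blast
    have D: "is_cycle V E (D i) \<and> set (D i) \<subseteq> set (C i) \<union> {z2} \<and> (z1 \<notin> set (C i) \<longrightarrow> D i = C i)" if "i < s" for i
      using D0 that by blast
    have CV: "set (C i) \<subseteq> ?V'" if "i < s" for i using C(1) that unfolding is_cycle_def by auto
    have "\<forall>i < s. \<forall>j < s. i \<noteq> j \<longrightarrow> anticomplete E (set (D i)) (set (D j))"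
    proof (intro allI impI)
      fix i j assume ij: "i < s" "j < s" "i \<noteq> j"
      have ac: "anticomplete ?E' (set (C i)) (set (C j))" "anticomplete ?E' (set (C j)) (set (C i))"
        using C(2) ij by auto
      have key: "anticomplete E (set (D i)) (set (D j))"
        if ij': "i < s" "j < s" "anticomplete ?E' (set (C i)) (set (C j))" "z1 \<notin> set (C j)" for i j
      proof -
        have Dj: "D j = C j" using D[OF ij'(2)] ij'(4) by auto
        have Di: "set (D i) \<subseteq> set (C i) \<union> {z2}" using D[OF ij'(1)] by auto
        have Cj: "set (C j) \<subseteq> ?V'" "z1 \<notin> set (C j)" using CV[OF ij'(2)] ij'(4) by auto
        have Ci: "set (C i) \<subseteq> ?V'" using CV[OF ij'(1)] .
        show ?thesis unfolding anticomplete_def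
        proof (intro conjI ballI)
          show "set (D i) \<inter> set (D j) = {}" using Di Dj Cj ij'(3) unfolding anticomplete_def by auto
        next
          fix a b assume ab: "a \<in> set (D i)" "b \<in> set (D j)"
          have b: "b \<in> set (C j)" "b \<noteq> z2" "b \<noteq> z1" using ab Dj Cj by auto
          show "\<not> adj E a b"
          proof
            assume adj: "adj E a b"
            show False
            proof (cases "a = z2")
              case True
              then have "z1 \<in> set (C i)"
                using D[OF ij'(1)] ab(1) Ci by auto
              moreover have "adj ?E' z1 b" using A[of z1 b] b adj True z12 by auto
              ultimately show False using ij'(3) b unfolding anticomplete_def by blast
            next
              case False
              then have "a \<in> set (C i)" using Di ab by auto
              moreover have "adj ?E' a b" using A[of a b] b adj False by auto
              ultimately show False using ij'(3) b unfolding anticomplete_def by blast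
            qed
          qed
        qed
      qed
      show "anticomplete E (set (D i)) (set (D j))"
      proof (cases "z1 \<in> set (C j)")
        case False
        then show ?thesis using key[OF ij(1,2) ac(1)] by blast
      next
        case True
        then have "z1 \<notin> set (C i)" using ac(1) unfolding anticomplete_def by blast
        then have "anticomplete E (set (D j)) (set (D i))" using key[OF ij(2,1) ac(2)] by blast
        then show ?thesis unfolding anticomplete_def by (metis Int_commute adj_sym)
      qed
    qed
    moreover have "\<forall>i < s. is_cycle V E (D i)" using D by blast
    ultimately show False using g(2) unfolding sO_free_def by blast
  qed
  moreover have "graph ?V' ?E'" using graph_conE[OF g(1) zV(1) z12] .
  ultimately show ?thesis unfolding plantation_def by auto
qed

lemma arith_key:
  fixes a b p q :: nat
  assumes "q + 1 = p \<or> p + 1 = q" "a \<noteq> b"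
  defines "i \<equiv> (if a < p then a else Suc a)" and "j \<equiv> (if b < p then b else Suc b)"
  shows "((i + 1 = j \<or> j + 1 = i) \<or> (i = q \<and> j \<noteq> q \<and> (p + 1 = j \<or> j + 1 = p)) \<or>
          (j = q \<and> i \<noteq> q \<and> (i + 1 = p \<or> p + 1 = i))) \<longleftrightarrow> (a + 1 = b \<or> b + 1 = a)"
  using assms(1,2) unfolding i_def j_def by auto

lemma contract_path:
  assumes g: "graph V E" and z12: "z1 \<noteq> z2" and a12: "adj E z1 z2"
    and P: "induced_path V E xs" and zin: "z1 \<in> set xs" "z2 \<in> set xs"
  shows "\<exists>ys. induced_path (V - {z2}) (conE E z1 z2) ys \<and> set ys = set xs - {z2} \<and>
           hd ys \<in> {hd xs, z1} - {z2} \<and> last ys \<in> {last xs, z1} - {z2}"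
proof -
  let ?E' = "conE E z1 z2"
  have dx: "distinct xs" "set xs \<subseteq> V" and adjx: "\<And>i j. i < length xs \<Longrightarrow> j < length xs \<Longrightarrow>
      adj E (xs ! i) (xs ! j) \<longleftrightarrow> (i + 1 = j \<or> j + 1 = i)"
    using P unfolding induced_path_def by auto
  obtain p where p: "p < length xs" "xs ! p = z2" using zin(2) by (metis in_set_conv_nth)
  obtain q where q: "q < length xs" "xs ! q = z1" using zin(1) by (metis in_set_conv_nth)
  have pq: "q + 1 = p \<or> p + 1 = q" using adjx[OF q(1) p(1)] a12 p q by simp
  define n where "n = length xs"
  define ys where "ys = take p xs @ drop (Suc p) xs"
  define g where "g k = (if k < p then k else Suc k)" for k
  have xs_dec: "xs = take p xs @ z2 # drop (Suc p) xs" using p id_take_nth_drop by metis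
  have lys: "length ys = n - 1" unfolding ys_def n_def using p by simp
  have n2: "n \<ge> 2" using pq p q unfolding n_def by auto
  have ysg: "ys ! k = xs ! g k" if "k < n - 1" for k
  proof (cases "k < p")
    case True then show ?thesis unfolding ys_def g_def using p by (simp add: nth_append)
  next
    case False then show ?thesis unfolding ys_def g_def using p that n_def
      by (simp add: nth_append)
  qed
  have gl: "g k < n" "g k \<noteq> p" if "k < n - 1" for k using that unfolding g_def by auto
  have setys: "set ys = set xs - {z2}" and dys: "distinct ys"
  proof -
    have "distinct (take p xs @ z2 # drop (Suc p) xs)" using dx(1) xs_dec by metis
    then have "z2 \<notin> set ys" "distinct ys" unfolding ys_def by auto
    moreover have "set xs = set ys \<union> {z2}" unfolding ys_def using xs_dec
      by (metis Un_insert_right list.simps(15) set_append sup_bot.right_neutral)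
    ultimately show "set ys = set xs - {z2}" "distinct ys" by auto
  qed
  have xneq: "xs ! i = xs ! j \<longleftrightarrow> i = j" if "i < n" "j < n" for i j
    using nth_eq_iff_index_eq[OF dx(1)] that n_def by auto
  have ind: "adj ?E' (ys ! a) (ys ! b) \<longleftrightarrow> (a + 1 = b \<or> b + 1 = a)"
    if ab: "a < length ys" "b < length ys" for a b
  proof (cases "a = b")
    case True
    have "graph (V - {z2}) ?E'" using graph_conE[OF g _ z12] zin(1) dx(2) by blast
    then show ?thesis using True graph_noloop by fastforce
  next
    case False
    have a: "a < n - 1" "b < n - 1" using ab lys by auto
    have ne: "xs ! g a \<noteq> z2" "xs ! g b \<noteq> z2" using xneq[OF gl(1)[OF a(1)] p(1)[folded n_def]]
        xneq[OF gl(1)[OF a(2)] p(1)[folded n_def]] gl a p(2) by auto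
    have "adj ?E' (ys ! a) (ys ! b) \<longleftrightarrow> adj E (xs ! g a) (xs ! g b) \<or>
       (xs ! g a = z1 \<and> xs ! g b \<noteq> z1 \<and> adj E z2 (xs ! g b)) \<or>
       (xs ! g b = z1 \<and> xs ! g a \<noteq> z1 \<and> adj E (xs ! g a) z2)"
      unfolding ysg[OF a(1)] ysg[OF a(2)] using adj_conE[OF g z12 ne] .
    also have "\<dots> \<longleftrightarrow> ((g a + 1 = g b \<or> g b + 1 = g a) \<or> (g a = q \<and> g b \<noteq> q \<and> (p + 1 = g b \<or> g b + 1 = p)) \<or>
          (g b = q \<and> g a \<noteq> q \<and> (g a + 1 = p \<or> p + 1 = g a)))"
      using adjx[of "g a" "g b"] adjx[of p "g b"] adjx[of "g a" p] gl[OF a(1)] gl[OF a(2)] p q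
        xneq[of "g a" q] xneq[of "g b" q] n_def by auto
    also have "\<dots> \<longleftrightarrow> (a + 1 = b \<or> b + 1 = a)"
      unfolding g_def using arith_key[OF pq False] by simp
    finally show ?thesis .
  qed
  have ysne: "ys \<noteq> []" using lys n2 by auto
  have ipath: "induced_path (V - {z2}) ?E' ys"
    unfolding induced_path_def using ysne dys setys dx(2) ind by auto
  have hd: "hd ys \<in> {hd xs, z1} - {z2}"
  proof -
    have h: "hd ys = xs ! g 0" using ysg[of 0] n2 ysne by (simp add: hd_conv_nth)
    show ?thesis
    proof (cases "p = 0")
      case True
      then have "q = 1" using pq by auto
      then show ?thesis using h True unfolding g_def using q z12 by auto
    next
      case False
      then have "hd ys = xs ! 0" using h unfolding g_def by auto
      moreover have "xs ! 0 \<noteq> xs ! p" using xneq[of 0 p] False p(1) n_def n2 by linarith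
      then have "xs ! 0 \<noteq> z2" using p(2) by simp
      moreover have xsne: "xs \<noteq> []" using n2 n_def by auto
      ultimately show ?thesis using \<open>xs ! 0 \<noteq> z2\<close> by (auto simp: hd_conv_nth[OF xsne])
    qed
  qed
  have last: "last ys \<in> {last xs, z1} - {z2}"
  proof -
    have h: "last ys = xs ! g (n - 2)" using ysg[of "n - 2"] n2 ysne lys
      by (simp add: last_conv_nth numeral_2_eq_2)
    show ?thesis
    proof (cases "p = n - 1")
      case True
      then have "q = n - 2" using pq q n_def by auto
      then show ?thesis using h True n2 unfolding g_def using q z12 by auto
    next
      case False
      then have "p < n - 1" using p n_def by auto
      moreover have "Suc (n - 2) = n - 1" using n2 by simp
      ultimately have "last ys = xs ! (n - 1)" using h n2 unfolding g_def by auto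
      moreover have "xs ! (n - 1) \<noteq> xs ! p" using xneq[of "n - 1" p] False p(1) n_def n2 by linarith
      then have "xs ! (n - 1) \<noteq> z2" using p(2) by simp
      moreover have xsne: "xs \<noteq> []" using n2 n_def by auto
      ultimately show ?thesis using \<open>xs ! (n - 1) \<noteq> z2\<close> n_def by (auto simp: last_conv_nth[OF xsne])
    qed
  qed
  show ?thesis using ipath setys hd last by blast
qed

lemma contract_n_paths:
  assumes g: "graph V E" and z: "z1 \<in> Z" "z2 \<in> Z" "adj E z1 z2"
  shows "n_paths V E Z \<le> n_paths (V - {z2}) (conE E z1 z2) (Z - {z2})"
proof -
  have z12: "z1 \<noteq> z2" using graph_noloop[OF g] z(3) by blast
  let ?A = "{S. \<exists>xs. induced_path V E xs \<and> set xs = S \<and> Z \<subseteq> S \<and> hd xs \<in> Z \<and> last xs \<in> Z}"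
  let ?B = "{S. \<exists>xs. induced_path (V - {z2}) (conE E z1 z2) xs \<and> set xs = S \<and> Z - {z2} \<subseteq> S \<and>
      hd xs \<in> Z - {z2} \<and> last xs \<in> Z - {z2}}"
  have inj: "inj_on (\<lambda>S. S - {z2}) ?A"
  proof (rule inj_onI)
    fix S T assume ST: "S \<in> ?A" "T \<in> ?A" "S - {z2} = T - {z2}"
    have "Z \<subseteq> S" "Z \<subseteq> T" using ST(1,2) by auto
    then have "z2 \<in> S" "z2 \<in> T" using z by auto
    then show "S = T" using ST(3) by blast
  qed
  have sub: "(\<lambda>S. S - {z2}) ` ?A \<subseteq> ?B"
  proof
    fix S' assume "S' \<in> (\<lambda>S. S - {z2}) ` ?A"
    then obtain S where S: "S \<in> ?A" "S' = S - {z2}" by blast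
    then obtain xs where xs: "induced_path V E xs" "Z \<subseteq> set xs" "hd xs \<in> Z" "last xs \<in> Z"
      "S' = set xs - {z2}" by auto
    obtain ys where ys: "induced_path (V - {z2}) (conE E z1 z2) ys" "set ys = set xs - {z2}"
      "hd ys \<in> {hd xs, z1} - {z2}" "last ys \<in> {last xs, z1} - {z2}"
      using contract_path[OF g z12 z(3) xs(1)] xs(2) z by blast
    have h: "hd ys \<in> Z - {z2}" "last ys \<in> Z - {z2}" using ys(3,4) xs(3,4) z(1) by auto
    have st: "set ys = S'" "Z - {z2} \<subseteq> S'" using ys(2) xs(2,5) by auto
    show "S' \<in> ?B" using ys(1) h st by blast
  qed
  have fin: "finite ?B" by (rule n_paths_finite) (use g in \<open>auto simp: graph_def\<close>)
  have "card ?A = card ((\<lambda>S. S - {z2}) ` ?A)" using card_image[OF inj] by simp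
  also have "\<dots> \<le> card ?B" using card_mono[OF fin sub] .
  finally show ?thesis unfolding n_paths_def .
qed

lemma main_ind:
  "\<forall>(V :: 'a set) (E :: 'a set set) (Z :: 'a set). card V = N \<longrightarrow> plantation s V E Z \<longrightarrow>
     (\<exists>(V' :: 'a set) (E' :: 'a set set) (Z' :: 'a set). plantation s V' E' Z' \<and> dyadic V' E' Z' \<and>
           card V' \<le> card V \<and> card Z' \<le> card Z \<and> n_paths V E Z \<le> n_paths V' E' Z')"
proof (induction N rule: less_induct)
  case (less N)
  show ?case
  proof (intro allI impI)
    fix V :: "'a set" and E Z assume cV: "card V = N" and P: "plantation s V E Z"
    have g: "graph V E" and ch: "cycle_hitting V E Z" using P unfolding plantation_def by auto
    have fV: "finite V" using g unfolding graph_def by auto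
    have ZV: "Z \<subseteq> V" using ch unfolding cycle_hitting_def by auto
    have fZ: "finite Z" using finite_subset[OF ZV fV] .
    show "\<exists>(V' :: 'a set) (E' :: 'a set set) (Z' :: 'a set). plantation s V' E' Z' \<and> dyadic V' E' Z' \<and>
           card V' \<le> card V \<and> card Z' \<le> card Z \<and> n_paths V E Z \<le> n_paths V' E' Z'"
    proof (cases "dyadic V E Z")
      case True
      have "plantation s V E Z \<and> dyadic V E Z \<and> card V \<le> card V \<and> card Z \<le> card Z \<and>
        n_paths V E Z \<le> n_paths V E Z" using P True by simp
      then show ?thesis by blast
    next
      case False
      show ?thesis
      proof (cases "\<exists>z1\<in>Z. \<exists>z2\<in>Z. adj E z1 z2")
        case True
        then obtain z1 z2 where z: "z1 \<in> Z" "z2 \<in> Z" "adj E z1 z2" by blast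
        have P': "plantation s (V - {z2}) (conE E z1 z2) (Z - {z2})"
          using contract_plantation[OF P z] .
        have lt: "card (V - {z2}) < N" using cV fV z(2) ZV by (metis card_Diff1_less subsetD)
        obtain V' :: "'a set" and E' :: "'a set set" and Z' :: "'a set" where R: "plantation s V' E' Z'" "dyadic V' E' Z'"
          "card V' \<le> card (V - {z2})" "card Z' \<le> card (Z - {z2})"
          "n_paths (V - {z2}) (conE E z1 z2) (Z - {z2}) \<le> n_paths V' E' Z'"
          using less.IH[OF lt, rule_format, OF refl P'] by blast
        have "card (Z - {z2}) \<le> card Z" using fZ by (simp add: card_Diff1_le)
        moreover have "card (V - {z2}) \<le> card V" using fV by (simp add: card_Diff1_le)
        moreover have "n_paths V E Z \<le> n_paths (V - {z2}) (conE E z1 z2) (Z - {z2})"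
          using contract_n_paths[OF g z] .
        ultimately have "card V' \<le> card V" "card Z' \<le> card Z" "n_paths V E Z \<le> n_paths V' E' Z'"
          using R(3,4,5) by linarith+
        then show ?thesis using R(1,2) by blast
      next
        case nE: False
        then obtain v where v: "v \<in> V" "v \<notin> Z" "\<not> card {z\<in>Z. adj E v z} \<le> 2"
          using False unfolding dyadic_def by blast
        have P': "plantation s (V - {v}) (delE E v) Z"
          using delete_plantation[OF P v(1,2)] .
        have lt: "card (V - {v}) < N" using cV fV v(1) by (metis card_Diff1_less)
        obtain V' :: "'a set" and E' :: "'a set set" and Z' :: "'a set" where R: "plantation s V' E' Z'" "dyadic V' E' Z'"
          "card V' \<le> card (V - {v})" "card Z' \<le> card Z"
          "n_paths (V - {v}) (delE E v) Z \<le> n_paths V' E' Z'"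
          using less.IH[OF lt, rule_format, OF refl P'] by blast
        moreover have "card (V - {v}) \<le> card V" using fV by (simp add: card_Diff1_le)
        moreover have "n_paths V E Z \<le> n_paths (V - {v}) (delE E v) Z"
          using delete_n_paths[OF g v(1,2)] v(3) by simp
        ultimately have "card V' \<le> card V" "card Z' \<le> card Z" "n_paths V E Z \<le> n_paths V' E' Z'"
          by linarith+
        then show ?thesis using R(1,2) by blast
      qed
    qed
  qed
qed

theorem mainTheorem16:
  fixes s :: nat and V Z :: "'a set" and E :: "'a set set"
  assumes "s \<ge> 1" and "plantation s V E Z"
  shows "\<exists>(V' :: 'a set) (E' :: 'a set set) (Z' :: 'a set). plantation s V' E' Z' \<and> dyadic V' E' Z' \<and>
           card V' \<le> card V \<and> card Z' \<le> card Z \<and>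
           n_paths V E Z \<le> n_paths V' E' Z'"
  using main_ind[rule_format, OF refl assms(2)] .

end
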